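(* Let $\beta>0$ and let $S$ be a possible forest with vertex set $\{v_{s_1},\dots,v_{s_k}\}$, $s_1<\dots<s_k$. Then for every $t\ge s_k$, \[ \Pr(S\subset G^t_{1,\beta})=\frac{\beta}{d_S^{\mathrm{in}}(v_1)+\beta}\prod_{i:\,v_i\in V^-}\frac{\Gamma(1+d_S^{\mathrm{in}}(v_i)+\beta)}{\Gamma(1+\beta)}\prod_{(v_i,v_j)\in E(S),\ i>j}\frac{1}{(2+\beta)(i^{1+\beta}j)^{1/(2+\beta)}}\cdot\exp\!\left(O\!\left(\sum_{j=2}^{k}\frac{c_S(s_j)^2}{j-1}\right)\right), \] where the implied constant in the $O(\cdot)$ does not depend on $S$ or $t$.
   Context: Fix a real $\beta>0$ and a positive integer $m$. The random tree process $(G^n_{1,\beta})_{n\ge1}$ is defined as follows. $G^1_{1,\beta}$ consists of a single vertex $v_1$ and no edges. Given $G^n_{1,\beta}$ with vertices $v_1,\dots,v_n$ and directed edges $e_2,\dots,e_n$ (where $e_i$ is the edge whose tail is $v_i$), $G^{n+1}_{1,\beta}$ is obtained by adding a vertex $v_{n+1}$ and a directed edge $e_{n+1}$ with tail $v_{n+1}$ and head a "target vertex" determined by a random variable $f_{n+1}$, independent of $f_2,\dots,f_n$, taking values in $\Omega_{n+1}=\{(i,v):1\le i\le n\}\cup\{(i,h),(i,t):2\le i\le n\}$ with $\Pr(f_{n+1}=(i,v))=\beta/((2+\beta)n-2)$ and $\Pr(f_{n+1}=(i,h))=\Pr(f_{n+1}=(i,t))=1/((2+\beta)n-2)$. If $f_{n+1}=(i,v)$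 the target is $v_i$ (chosen "uniformly"); if $f_{n+1}=(i,h)$ the target is the head of $e_i$, and if $f_{n+1}=(i,t)$ the target is the tail $v_i$ of $e_i$ (chosen "preferentially", by copying the head half-edge, resp. tail half-edge, of $e_i$). Consequently the target is $v_i$ with probability $(d_n(v_i)+\beta)/((2+\beta)n-2)$, where $d_n(v)$ is the degree of $v$ in $G^n_{1,\beta}$. Each edge is regarded as two half-edges, one at each endpoint; the degree of a vertex is the number of half-edges at it (loops count twice). A possible forest is a directed forest $S$ whose vertices are labelled vertices $v_i$ of the process (identified by their index), with no isolated vertices, in which every vertex has out-degree $0$ or $1$, every edge $(v_i,v_j)$ has $i>j$, and $v_1$ (if present) has out-degree $0$. "$S\subset G^t_{1,\beta}$" means every edge $(v_i,v_j)$ of $S$ is an edge of $G^t_{1,\beta}$ (with labels matching). $d_S^{\mathrm{in}}(v)$ is the in-degree of $v$ in $S$ (taken to be $0$ if $v\notin V(S)$). $V^-=\{v_i\in V(S):\exists j>i,\ (v_j,v_i)\in E(S)\}$. For $t\ge i$, $R_t(i)=|\{j>t:(v_j,v_i)\in E(S)\}|$, and $c_S(i)=\sum_{k=1}^{i-1}R_{i-1}(k)$, i.e. the number of edges of $S$ from $\{v_i,v_{i+1},\dots\}$ to $\{v_1,\dots,v_{i-1}\}$. *)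

theory Defs
  imports "HOL-Probability.Probability"
begin

text \<open>Elements of \<Omega>_{n+1}: (i,v), (i,h), (i,t).\<close>
datatype choice = Cv nat | Ch nat | Ct nat

text \<open>Law of f_{n+1} when the current graph has n vertices (n \<ge> 1).\<close>
definition choice_weight :: "real \<Rightarrow> nat \<Rightarrow> choice \<Rightarrow> real" where
  "choice_weight \<beta> n c = (case c of
     Cv i \<Rightarrow> (if 1 \<le> i \<and> i \<le> n then \<beta> / ((2 + \<beta>) * real n - 2) else 0)
   | Ch i \<Rightarrow> (if 2 \<le> i \<and> i \<le> n then 1 / ((2 + \<beta>) * real n - 2) else 0)
   | Ct i \<Rightarrow> (if 2 \<le> i \<and> i \<le> n then 1 / ((2 + \<beta>) * real n - 2) else 0))"

definition choice_pmf :: "real \<Rightarrow> nat \<Rightarrow> choice pmf" where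
  "choice_pmf \<beta> n = embed_pmf (choice_weight \<beta> n)"

text \<open>A graph of the process is encoded by its head map: hm i = index of the head of e_i
  (for 2 \<le> i \<le> n), and 0 elsewhere.\<close>
definition target :: "(nat \<Rightarrow> nat) \<Rightarrow> choice \<Rightarrow> nat" where
  "target hm c = (case c of Cv i \<Rightarrow> i | Ct i \<Rightarrow> i | Ch i \<Rightarrow> hm i)"

fun tree_pmf :: "real \<Rightarrow> nat \<Rightarrow> (nat \<Rightarrow> nat) pmf" where
  "tree_pmf \<beta> 0 = return_pmf (\<lambda>_. 0)"
| "tree_pmf \<beta> (Suc 0) = return_pmf (\<lambda>_. 0)"
| "tree_pmf \<beta> (Suc (Suc n)) =
     bind_pmf (tree_pmf \<beta> (Suc n)) (\<lambda>hm.
     bind_pmf (choice_pmf \<beta> (Suc n)) (\<lambda>f.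
     return_pmf (hm(Suc (Suc n) := target hm f))))"

definition prob_contained :: "real \<Rightarrow> nat \<Rightarrow> (nat \<times> nat) set \<Rightarrow> real" where
  "prob_contained \<beta> t E =
     measure_pmf.prob (tree_pmf \<beta> t) {hm. \<forall>(i, j) \<in> E. i \<le> t \<and> hm i = j}"

text \<open>Possible forest, given by its edge set (pairs (i,j) meaning edge (v_i,v_j));
  vertices are exactly the endpoints (no isolated vertices).\<close>
definition possible_forest :: "(nat \<times> nat) set \<Rightarrow> bool" where
  "possible_forest E \<longleftrightarrow> finite E \<and>
     (\<forall>(i, j) \<in> E. 1 \<le> j \<and> j < i) \<and>
     (\<forall>i j j'. (i, j) \<in> E \<longrightarrow> (i, j') \<in> E \<longrightarrow> j = j')"

definition fverts :: "(nat \<times> nat) set \<Rightarrow> nat set" where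
  "fverts E = fst ` E \<union> snd ` E"

definition din :: "(nat \<times> nat) set \<Rightarrow> nat \<Rightarrow> nat" where
  "din E v = card {a. (a, v) \<in> E}"

definition vminus :: "(nat \<times> nat) set \<Rightarrow> nat set" where
  "vminus E = {v \<in> fverts E. \<exists>a. a > v \<and> (a, v) \<in> E}"

definition cS :: "(nat \<times> nat) set \<Rightarrow> nat \<Rightarrow> nat" where
  "cS E i = card {(a, b) \<in> E. i \<le> a \<and> b < i}"

text \<open>s_j (1-based): j-th smallest vertex index.\<close>
definition svert :: "(nat \<times> nat) set \<Rightarrow> nat \<Rightarrow> nat" where
  "svert E j = sorted_list_of_set (fverts E) ! (j - 1)"

definition main_term :: "real \<Rightarrow> (nat \<times> nat) set \<Rightarrow> real" where
  "main_term \<beta> E =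
     \<beta> / (real (din E 1) + \<beta>)
     * (\<Prod>i \<in> vminus E. Gamma (1 + real (din E i) + \<beta>) / Gamma (1 + \<beta>))
     * (\<Prod>(i, j) \<in> E. 1 / ((2 + \<beta>) * (real i powr (1 + \<beta>) * real j) powr (1 / (2 + \<beta>))))"

definition error_sum :: "(nat \<times> nat) set \<Rightarrow> real" where
  "error_sum E = (\<Sum>j = 2..card (fverts E). real (cS E (svert E j))^2 / real (j - 1))"

end

theory Submission
  imports Defs
begin


definition deg :: "(nat \<Rightarrow> nat) \<Rightarrow> nat \<Rightarrow> nat \<Rightarrow> nat" where
  "deg hm n v = (if 2 \<le> v then 1 else 0) + card {i \<in> {2..n}. hm i = v}"

definition Nn :: "real \<Rightarrow> nat \<Rightarrow> real" where "Nn \<beta> n = (2+\<beta>) * real n - 2"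

definition valid :: "nat \<Rightarrow> (nat \<Rightarrow> nat) \<Rightarrow> bool" where
  "valid n hm \<longleftrightarrow> (\<forall>i. 2 \<le> i \<longrightarrow> i \<le> n \<longrightarrow> 1 \<le> hm i \<and> hm i < i)"

definition CA :: "nat \<Rightarrow> choice set" where
  "CA n = Cv ` {1..n} \<union> Ch ` {2..n} \<union> Ct ` {2..n}"

lemma sum_CA: "sum h (CA n) = (\<Sum>i=1..n. h (Cv i)) + (\<Sum>i=2..n. h (Ch i)) + (\<Sum>i=2..n. h (Ct i))"
  unfolding CA_def
  by (subst sum.union_disjoint; (auto simp: sum.union_disjoint sum.reindex inj_on_def)?)+

lemma finite_CA: "finite (CA n)" unfolding CA_def by auto

lemma Nn_pos: "\<beta> > 0 \<Longrightarrow> n \<ge> 1 \<Longrightarrow> Nn \<beta> n > 0"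
  unfolding Nn_def by (smt (verit, best) mult_le_cancel_left1 of_nat_1 of_nat_mono)

lemma Nn_ge: "\<beta> > 0 \<Longrightarrow> n \<ge> 1 \<Longrightarrow> Nn \<beta> n \<ge> \<beta> * n"
  unfolding Nn_def by (simp add: algebra_simps)

lemma cw_nonneg: "\<beta> > 0 \<Longrightarrow> n \<ge> 1 \<Longrightarrow> 0 \<le> choice_weight \<beta> n c"
  using Nn_pos[of \<beta> n] unfolding choice_weight_def Nn_def by (auto split: choice.split)

lemma cw_zero: "c \<notin> CA n \<Longrightarrow> choice_weight \<beta> n c = 0"
  unfolding choice_weight_def CA_def by (auto split: choice.split)

lemma cw_sum: assumes "\<beta> > 0" "n \<ge> 1" shows "sum (choice_weight \<beta> n) (CA n) = 1"
proof -
  have N: "(2 + \<beta>) * real n - 2 > 0" using Nn_pos[OF assms] by (simp add: Nn_def)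
  have "sum (choice_weight \<beta> n) (CA n) = real n * \<beta> / ((2 + \<beta>) * real n - 2)
      + 2 * (real n - 1) / ((2 + \<beta>) * real n - 2)"
    unfolding sum_CA using assms by (simp add: choice_weight_def of_nat_diff add_divide_distrib)
  also have "\<dots> = (real n * \<beta> + 2 * (real n - 1)) / ((2 + \<beta>) * real n - 2)"
    by (simp add: add_divide_distrib)
  also have "real n * \<beta> + 2 * (real n - 1) = (2 + \<beta>) * real n - 2" by (simp add: algebra_simps)
  also have "((2 + \<beta>) * real n - 2) / ((2 + \<beta>) * real n - 2) = 1" using N by simp
  finally show ?thesis .
qed

lemma pmf_choice: assumes "\<beta> > 0" "n \<ge> 1"
  shows "pmf (choice_pmf \<beta> n) c = choice_weight \<beta> n c"
  unfolding choice_pmf_def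
proof (rule pmf_embed_pmf)
  show "\<And>x. 0 \<le> choice_weight \<beta> n x" using cw_nonneg[OF assms] .
  have "(\<integral>\<^sup>+x. ennreal (choice_weight \<beta> n x) \<partial>count_space UNIV) = (\<Sum>x\<in>CA n. ennreal (choice_weight \<beta> n x))"
    by (rule nn_integral_count_space') (auto simp: finite_CA cw_zero)
  also have "\<dots> = ennreal (sum (choice_weight \<beta> n) (CA n))"
    by (rule sum_ennreal) (use cw_nonneg[OF assms] in auto)
  also have "\<dots> = 1" using cw_sum[OF assms] by simp
  finally show "(\<integral>\<^sup>+x. ennreal (choice_weight \<beta> n x) \<partial>count_space UNIV) = 1" .
qed

lemma set_choice: assumes "\<beta> > 0" "n \<ge> 1" shows "set_pmf (choice_pmf \<beta> n) \<subseteq> CA n"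
  using cw_zero by (force simp: set_pmf_iff pmf_choice[OF assms])

lemma fiber_sum:
  fixes hm :: "nat \<Rightarrow> nat" and n :: nat and G :: "nat \<Rightarrow> real"
  assumes "\<And>i. i \<in> {2..n} \<Longrightarrow> hm i \<in> {1..n}"
  shows "(\<Sum>i=2..n. G (hm i)) = (\<Sum>v=1..n. real (card {i \<in> {2..n}. hm i = v}) * G v)"
proof -
  have "(\<Sum>i=2..n. G (hm i)) = (\<Sum>v=1..n. \<Sum>i\<in>{i \<in> {2..n}. hm i = v}. G (hm i))"
    by (rule sum.group[symmetric]) (use assms in auto)
  also have "\<dots> = (\<Sum>v=1..n. real (card {i \<in> {2..n}. hm i = v}) * G v)"
    by (rule sum.cong) auto
  finally show ?thesis .
qed

lemma lemmaT:
  assumes "\<beta> > 0" "n \<ge> 1" "valid n hm"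
  shows "(\<Sum>c\<in>CA n. G (target hm c) * choice_weight \<beta> n c)
       = (\<Sum>v=1..n. G v * (real (deg hm n v) + \<beta>) / Nn \<beta> n)"
proof -
  have hm: "\<And>i. i \<in> {2..n} \<Longrightarrow> hm i \<in> {1..n}" using assms(3) unfolding valid_def by force
  have "(\<Sum>c\<in>CA n. G (target hm c) * choice_weight \<beta> n c)
     = (\<Sum>i=1..n. G i * \<beta> / Nn \<beta> n) + (\<Sum>i=2..n. G (hm i)) / Nn \<beta> n + (\<Sum>i=2..n. G i) / Nn \<beta> n"
    unfolding sum_CA by (simp add: choice_weight_def target_def Nn_def sum_divide_distrib)
  also have "(\<Sum>i=2..n. G (hm i)) = (\<Sum>v=1..n. real (card {i \<in> {2..n}. hm i = v}) * G v)"
    by (rule fiber_sum[OF hm])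
  also have "(\<Sum>i=2..n. G i) = (\<Sum>v=1..n. (if 2 \<le> v then 1 else 0) * G v)"
    by (rule sum.mono_neutral_cong_left) auto
  finally have L: "(\<Sum>c\<in>CA n. G (target hm c) * choice_weight \<beta> n c) = 
     (\<Sum>i=1..n. G i * \<beta> / Nn \<beta> n) + (\<Sum>v=1..n. real (card {i \<in> {2..n}. hm i = v}) * G v) / Nn \<beta> n
     + (\<Sum>v=1..n. (if 2 \<le> v then 1 else 0) * G v) / Nn \<beta> n" .
  have R: "(\<Sum>v=1..n. G v * (real (deg hm n v) + \<beta>) / Nn \<beta> n) = (\<Sum>v=1..n. G v * \<beta> / Nn \<beta> n
     + real (card {i \<in> {2..n}. hm i = v}) * G v / Nn \<beta> n + (if 2 \<le> v then 1 else 0) * G v / Nn \<beta> n)"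
    by (rule sum.cong) (auto simp: deg_def add_divide_distrib algebra_simps)
  show ?thesis unfolding L R by (simp add: sum.distrib sum_divide_distrib)
qed

lemma target_range:
  assumes "\<beta> > 0" "n \<ge> 1" "valid n hm" "f \<in> set_pmf (choice_pmf \<beta> n)"
  shows "1 \<le> target hm f \<and> target hm f \<le> n"
proof -
  have "f \<in> CA n" using set_choice[OF assms(1,2)] assms(4) by auto
  then show ?thesis using assms(3) unfolding CA_def valid_def target_def by fastforce
qed

lemma valid_tree: "\<beta> > 0 \<Longrightarrow> hm \<in> set_pmf (tree_pmf \<beta> n) \<Longrightarrow> valid n hm"
proof (induction \<beta> n arbitrary: hm rule: tree_pmf.induct)
  case (1 \<beta>) then show ?case by (auto simp: valid_def)
next
  case (2 \<beta>) then show ?case by (auto simp: valid_def)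
next
  case (3 \<beta> n)
  from 3(3) obtain hm0 f where h0: "hm0 \<in> set_pmf (tree_pmf \<beta> (Suc n))"
    and f: "f \<in> set_pmf (choice_pmf \<beta> (Suc n))" and hm: "hm = hm0(Suc (Suc n) := target hm0 f)"
    by auto
  have v0: "valid (Suc n) hm0" using 3(1)[OF 3(2) h0] .
  have "1 \<le> target hm0 f \<and> target hm0 f \<le> Suc n" using target_range[OF 3(2) _ v0 f] by simp
  then show ?case using v0 unfolding hm valid_def by (auto simp: le_Suc_eq)
qed

definition Rn :: "(nat \<times> nat) set \<Rightarrow> nat \<Rightarrow> nat \<Rightarrow> nat" where
  "Rn E n v = card {a. (a, v) \<in> E \<and> n < a}"

definition indE :: "(nat \<times> nat) set \<Rightarrow> nat \<Rightarrow> (nat \<Rightarrow> nat) \<Rightarrow> bool" where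
  "indE E n hm \<longleftrightarrow> (\<forall>(i, j) \<in> E. i \<le> n \<longrightarrow> hm i = j)"

definition FF :: "real \<Rightarrow> (nat \<times> nat) set \<Rightarrow> nat \<Rightarrow> (nat \<Rightarrow> nat) \<Rightarrow> real" where
  "FF \<beta> E n hm = (if indE E n hm then 1 else 0) *
     (\<Prod>v\<in>{1..n}. pochhammer (real (deg hm n v) + \<beta>) (Rn E n v))"

definition stepf :: "real \<Rightarrow> (nat \<times> nat) set \<Rightarrow> nat \<Rightarrow> real" where
  "stepf \<beta> E n = (if \<exists>j. (Suc n, j) \<in> E then 1 / Nn \<beta> n else 1 + real (cS E (Suc n)) / Nn \<beta> n)"

definition Phi :: "real \<Rightarrow> (nat \<times> nat) set \<Rightarrow> nat \<Rightarrow> real" where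
  "Phi \<beta> E n = pochhammer \<beta> (din E 1) *
     (\<Prod>m\<in>{1..<n}. stepf \<beta> E m * pochhammer (1 + \<beta>) (din E (Suc m)))"

lemma deg_upd:
  assumes "valid n hm" "u \<in> {1..n}" "v \<in> {1..n}"
  shows "deg (hm(Suc n := v)) (Suc n) u = deg hm n u + (if u = v then 1 else 0)"
proof -
  have "{i \<in> {2..Suc n}. (hm(Suc n := v)) i = u} = {i \<in> {2..n}. hm i = u} \<union> (if v = u then {Suc n} else {})"
    using assms by (auto simp: le_Suc_eq)
  then show ?thesis unfolding deg_def by auto
qed

lemma deg_new:
  assumes "valid n hm" "v \<le> n" "n \<ge> 1"
  shows "deg (hm(Suc n := v)) (Suc n) (Suc n) = 1"
proof -
  have "{i \<in> {2..Suc n}. (hm(Suc n := v)) i = Suc n} = {}"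
    using assms unfolding valid_def by (auto simp: le_Suc_eq)
  then show ?thesis unfolding deg_def using assms by auto
qed

lemma finite_in: "finite E \<Longrightarrow> finite {a. (a, v) \<in> E \<and> P a}"
  by (rule finite_subset[of _ "fst ` E"]) force+

lemma Rn_Suc:
  assumes "finite E"
  shows "Rn E n u = Rn E (Suc n) u + (if (Suc n, u) \<in> E then 1 else 0)"
proof -
  have "{a. (a, u) \<in> E \<and> n < a} = {a. (a, u) \<in> E \<and> Suc n < a} \<union> (if (Suc n, u) \<in> E then {Suc n} else {})"
    by auto (metis Suc_lessI)
  then show ?thesis unfolding Rn_def using finite_in[OF assms] by auto
qed

lemma Rn_new:
  assumes "possible_forest E"
  shows "Rn E (Suc n) (Suc n) = din E (Suc n)"
proof -
  have "{a. (a, Suc n) \<in> E \<and> Suc n < a} = {a. (a, Suc n) \<in> E}"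
    using assms unfolding possible_forest_def by auto
  then show ?thesis unfolding Rn_def din_def by simp
qed

lemma ind_upd:
  assumes "possible_forest E"
  shows "indE E (Suc n) (hm(Suc n := v)) = (indE E n hm \<and> (\<forall>j. (Suc n, j) \<in> E \<longrightarrow> j = v))"
  using assms unfolding indE_def possible_forest_def by (auto simp: le_Suc_eq)

lemma sum_deg:
  assumes "valid n hm" "n \<ge> 1"
  shows "(\<Sum>v=1..n. real (deg hm n v)) = 2 * (real n - 1)"
proof -
  have hm: "\<And>i. i \<in> {2..n} \<Longrightarrow> hm i \<in> {1..n}" using assms(1) unfolding valid_def by force
  have a: "(\<Sum>i=2..n. (\<lambda>_. 1::real) (hm i)) = (\<Sum>v=1..n. real (card {i \<in> {2..n}. hm i = v}) * 1)"
    by (rule fiber_sum[OF hm])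
  have b: "(\<Sum>v=1..n. (if 2 \<le> v then 1 else 0::real)) = (\<Sum>v=2..n. 1)"
    by (rule sum.mono_neutral_cong_right) auto
  have c: "(\<Sum>v=2..n. 1::real) = real n - 1" using assms(2) by (simp add: of_nat_diff)
  have "(\<Sum>v=1..n. real (deg hm n v)) = (\<Sum>v=1..n. (if 2 \<le> v then 1 else 0::real)) + (\<Sum>v=1..n. real (card {i \<in> {2..n}. hm i = v}))"
    unfolding deg_def by (simp add: sum.distrib) (rule sum.cong, auto)
  then show ?thesis using a b c by simp
qed

lemma sum_Rn:
  assumes "possible_forest E"
  shows "(\<Sum>v=1..n. Rn E n v) = cS E (Suc n)"
proof -
  let ?S = "{(a, b) \<in> E. Suc n \<le> a \<and> b < Suc n}"
  have fin: "finite ?S" by (rule finite_subset[of _ E]) (use assms in \<open>auto simp: possible_forest_def\<close>)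
  have "cS E (Suc n) = (\<Sum>x\<in>?S. 1)" unfolding cS_def by simp
  also have "\<dots> = (\<Sum>v=1..n. \<Sum>x\<in>{x \<in> ?S. snd x = v}. 1)"
    by (rule sum.group[symmetric]) (use fin assms in \<open>auto simp: possible_forest_def\<close>)
  also have "\<dots> = (\<Sum>v=1..n. Rn E n v)"
  proof (rule sum.cong)
    fix v assume "v \<in> {1..n}"
    have "{x \<in> ?S. snd x = v} = (\<lambda>a. (a, v)) ` {a. (a, v) \<in> E \<and> n < a}"
      using \<open>v \<in> {1..n}\<close> by auto
    then have "card {x \<in> ?S. snd x = v} = Rn E n v"
      unfolding Rn_def by (simp add: card_image inj_on_def)
    then show "(\<Sum>x\<in>{x \<in> ?S. snd x = v}. 1) = Rn E n v" by simp
  qed simp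
  finally show ?thesis by simp
qed


lemma prod_bump:
  fixes x :: "nat \<Rightarrow> real"
  assumes "finite A" "v \<in> A"
  shows "x v * (\<Prod>u\<in>A. pochhammer (x u + (if u = v then 1 else 0)) (r u))
       = pochhammer (x v) (Suc (r v)) * (\<Prod>u\<in>A-{v}. pochhammer (x u) (r u))"
proof -
  have "(\<Prod>u\<in>A. pochhammer (x u + (if u = v then 1 else 0)) (r u))
     = pochhammer (x v + 1) (r v) * (\<Prod>u\<in>A-{v}. pochhammer (x u + (if u = v then 1 else 0)) (r u))"
    by (subst prod.remove[OF assms]) simp
  also have "(\<Prod>u\<in>A-{v}. pochhammer (x u + (if u = v then 1 else 0)) (r u)) = (\<Prod>u\<in>A-{v}. pochhammer (x u) (r u))"
    by (rule prod.cong) auto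
  finally show ?thesis by (simp add: pochhammer_rec)
qed

lemma FF_upd:
  assumes "\<beta> > 0" "possible_forest E" "n \<ge> 1" "valid n hm" "v \<in> {1..n}"
  shows "FF \<beta> E (Suc n) (hm(Suc n := v)) =
    (if indE E n hm \<and> (\<forall>j. (Suc n, j) \<in> E \<longrightarrow> j = v) then 1 else 0) *
    (\<Prod>u\<in>{1..n}. pochhammer (real (deg hm n u) + \<beta> + (if u = v then 1 else 0)) (Rn E (Suc n) u)) *
    pochhammer (1 + \<beta>) (din E (Suc n))"
proof -
  have p: "(\<Prod>u\<in>{Suc 0..n}. pochhammer (real (deg (hm(Suc n := v)) (Suc n) u) + \<beta>) (Rn E (Suc n) u))
     = (\<Prod>u\<in>{Suc 0..n}. pochhammer (real (deg hm n u) + \<beta> + (if u = v then 1 else 0)) (Rn E (Suc n) u))"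
    by (rule prod.cong) (use deg_upd[OF assms(4) _ assms(5)] in \<open>auto simp: add_ac\<close>)
  have q: "real (deg (hm(Suc n := v)) (Suc n) (Suc n)) + \<beta> = 1 + \<beta>"
    using deg_new[OF assms(4) _ assms(3)] assms(5) by simp
  show ?thesis unfolding FF_def
    by (simp add: prod.cl_ivl_Suc ind_upd[OF assms(2)] p q Rn_new[OF assms(2)] mult.assoc)
qed

lemma inner:
  assumes b: "\<beta> > 0" and pf: "possible_forest E" and n: "n \<ge> 1" and v: "valid n hm"
  shows "(\<Sum>v=1..n. FF \<beta> E (Suc n) (hm(Suc n := v)) * ((real (deg hm n v) + \<beta>) / Nn \<beta> n))
       = FF \<beta> E n hm * stepf \<beta> E n * pochhammer (1 + \<beta>) (din E (Suc n))"
proof -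
  define X where "X u = real (deg hm n u) + \<beta>" for u
  define R where "R u = Rn E n u" for u
  define R' where "R' u = Rn E (Suc n) u" for u
  define P1 where "P1 = pochhammer (1 + \<beta>) (din E (Suc n))"
  define I where "I = (if indE E n hm then 1 else 0::real)"
  define PP where "PP = (\<Prod>u\<in>{1..n}. pochhammer (X u) (R u))"
  define Q where "Q v = (\<Prod>u\<in>{1..n}. pochhammer (X u + (if u = v then 1 else 0)) (R' u))" for v
  define N where "N = Nn \<beta> n"
  have fin: "finite E" using pf unfolding possible_forest_def by auto
  have N0: "N > 0" unfolding N_def using Nn_pos[OF b n] .
  have FFn: "FF \<beta> E n hm = I * PP" unfolding FF_def I_def PP_def X_def R_def by simp
  have upd: "FF \<beta> E (Suc n) (hm(Suc n := v)) =
    (if indE E n hm \<and> (\<forall>j. (Suc n, j) \<in> E \<longrightarrow> j = v) then 1 else 0) * Q v * P1" if "v \<in> {1..n}" for v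
    using FF_upd[OF b pf n v that] unfolding X_def R'_def P1_def Q_def by simp
  have lhs: "(\<Sum>v=1..n. FF \<beta> E (Suc n) (hm(Suc n := v)) * ((real (deg hm n v) + \<beta>) / Nn \<beta> n))
     = (\<Sum>v=1..n. FF \<beta> E (Suc n) (hm(Suc n := v)) * (X v / N))" unfolding X_def N_def ..
  show ?thesis
  proof (cases "\<exists>j. (Suc n, j) \<in> E")
    case True
    then obtain j where j: "(Suc n, j) \<in> E" by auto
    have uniq: "\<And>u. (Suc n, u) \<in> E \<longleftrightarrow> u = j" using j pf unfolding possible_forest_def by blast
    have jr: "j \<in> {1..n}" using j pf unfolding possible_forest_def by auto
    have RR: "R u = R' u + (if u = j then 1 else 0)" for u
      unfolding R_def R'_def using Rn_Suc[OF fin, of n u] uniq[of u] by simp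
    have tw: "FF \<beta> E (Suc n) (hm(Suc n := v)) * (X v / N) = (if v = j then I * Q j * P1 * (X j / N) else 0)"
      if vr: "v \<in> {1..n}" for v
    proof -
      have c: "(indE E n hm \<and> (\<forall>j'. (Suc n, j') \<in> E \<longrightarrow> j' = v)) = (indE E n hm \<and> v = j)"
        using uniq by blast
      show ?thesis unfolding upd[OF vr] c I_def by simp
    qed
    have "(\<Sum>v=1..n. FF \<beta> E (Suc n) (hm(Suc n := v)) * (X v / N))
       = (\<Sum>v=1..n. if v = j then I * Q j * P1 * (X j / N) else 0)"
      by (rule sum.cong) (rule refl, rule tw)
    also have "\<dots> = I * Q j * P1 * (X j / N)" using jr by simp
    also have "X j * Q j = PP"
    proof -
      have "X j * Q j = pochhammer (X j) (Suc (R' j)) * (\<Prod>u\<in>{1..n}-{j}. pochhammer (X u) (R' u))"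
        unfolding Q_def by (rule prod_bump) (use jr in auto)
      also have "(\<Prod>u\<in>{1..n}-{j}. pochhammer (X u) (R' u)) = (\<Prod>u\<in>{1..n}-{j}. pochhammer (X u) (R u))"
        by (rule prod.cong) (auto simp: RR)
      also have "Suc (R' j) = R j" using RR[of j] by simp
      also have "pochhammer (X j) (R j) * (\<Prod>u\<in>{1..n}-{j}. pochhammer (X u) (R u)) = PP"
        unfolding PP_def by (rule prod.remove[symmetric]) (use jr in auto)
      finally show ?thesis .
    qed
    then have "I * Q j * P1 * (X j / N) = I * PP * (1 / N) * P1" by (simp add: mult_ac)
    finally have "(\<Sum>v=1..n. FF \<beta> E (Suc n) (hm(Suc n := v)) * (X v / N)) = I * PP * (1 / N) * P1" .
    moreover have "stepf \<beta> E n = 1 / N" unfolding stepf_def N_def using True by simp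
    ultimately show ?thesis unfolding lhs FFn P1_def by simp
  next
    case False
    have nE: "(Suc n, u) \<notin> E" for u using False by auto
    have RR: "R' u = R u" for u unfolding R_def R'_def using Rn_Suc[OF fin, of n u] nE[of u] by simp
    have tw: "FF \<beta> E (Suc n) (hm(Suc n := v)) * (X v / N) = I * P1 / N * (PP * (X v + R v))"
      if vr: "v \<in> {1..n}" for v
    proof -
      have c: "(indE E n hm \<and> (\<forall>j'. (Suc n, j') \<in> E \<longrightarrow> j' = v)) = indE E n hm"
        using nE by blast
      have "X v * Q v = pochhammer (X v) (Suc (R' v)) * (\<Prod>u\<in>{1..n}-{v}. pochhammer (X u) (R' u))"
        unfolding Q_def by (rule prod_bump) (use vr in auto)
      also have "\<dots> = (X v + R v) * (pochhammer (X v) (R v) * (\<Prod>u\<in>{1..n}-{v}. pochhammer (X u) (R u)))"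
        unfolding RR by (simp add: pochhammer_rec')
      also have "pochhammer (X v) (R v) * (\<Prod>u\<in>{1..n}-{v}. pochhammer (X u) (R u)) = PP"
        unfolding PP_def by (rule prod.remove[symmetric]) (use vr in auto)
      finally have xq: "X v * Q v = (X v + R v) * PP" .
      have "FF \<beta> E (Suc n) (hm(Suc n := v)) * (X v / N) = I * P1 / N * (X v * Q v)"
        unfolding upd[OF vr] c I_def by (simp add: mult_ac)
      then show ?thesis unfolding xq by (simp add: mult_ac)
    qed
    have "(\<Sum>v=1..n. FF \<beta> E (Suc n) (hm(Suc n := v)) * (X v / N))
       = (\<Sum>v=1..n. I * P1 / N * (PP * (X v + R v)))"
      by (rule sum.cong) (rule refl, rule tw)
    also have "\<dots> = I * P1 / N * PP * (\<Sum>v=1..n. X v + real (R v))"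
      by (simp add: sum_distrib_left mult.assoc)
    also have "(\<Sum>v=1..n. X v + real (R v)) = (\<Sum>v=1..n. X v) + (\<Sum>v=1..n. real (R v))"
      by (rule sum.distrib)
    also have "(\<Sum>v=1..n. X v) = N"
      unfolding X_def N_def using sum_deg[OF v n] n by (simp add: sum.distrib Nn_def algebra_simps)
    also have "(\<Sum>v=1..n. real (R v)) = real (cS E (Suc n))"
      unfolding R_def using sum_Rn[OF pf, of n] by (metis of_nat_sum)
    also have "I * P1 / N * PP * (N + real (cS E (Suc n))) = I * PP * (1 + real (cS E (Suc n)) / N) * P1"
      using N0 by (simp add: field_simps)
    finally have "(\<Sum>v=1..n. FF \<beta> E (Suc n) (hm(Suc n := v)) * (X v / N)) = I * PP * (1 + real (cS E (Suc n)) / N) * P1" .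
    moreover have "stepf \<beta> E n = 1 + real (cS E (Suc n)) / N" unfolding stepf_def N_def using False by simp
    ultimately show ?thesis unfolding lhs FFn P1_def by simp
  qed
qed

lemma FF_nonneg: "\<beta> > 0 \<Longrightarrow> 0 \<le> FF \<beta> E n hm"
  unfolding FF_def by (auto intro!: prod_nonneg less_imp_le[OF pochhammer_pos] add_nonneg_pos)

lemma stepf_pos: "\<beta> > 0 \<Longrightarrow> n \<ge> 1 \<Longrightarrow> 0 < stepf \<beta> E n"
  using Nn_pos[of \<beta> n] unfolding stepf_def by (auto intro!: add_pos_nonneg)

lemma Phi_pos: "\<beta> > 0 \<Longrightarrow> 0 < Phi \<beta> E n"
  unfolding Phi_def by (auto intro!: prod_pos mult_pos_pos stepf_pos pochhammer_pos)

lemma Q_step: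
  assumes b: "\<beta> > 0" and pf: "possible_forest E" and n: "n \<ge> 1"
  shows "(\<integral>\<^sup>+hm. ennreal (FF \<beta> E (Suc n) hm) \<partial>tree_pmf \<beta> (Suc n))
     = ennreal (stepf \<beta> E n * pochhammer (1 + \<beta>) (din E (Suc n))) * (\<integral>\<^sup>+hm. ennreal (FF \<beta> E n hm) \<partial>tree_pmf \<beta> n)"
proof -
  obtain k where k: "n = Suc k" using n by (cases n) auto
  define s where "s = stepf \<beta> E n * pochhammer (1 + \<beta>) (din E (Suc n))"
  have s0: "0 \<le> s" unfolding s_def
    using stepf_pos[OF b n, of E] pochhammer_pos[of "1+\<beta>" "din E (Suc n)"] b by simp
  have inn: "(\<integral>\<^sup>+f. ennreal (FF \<beta> E (Suc n) (hm(Suc n := target hm f))) \<partial>choice_pmf \<beta> n)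
       = ennreal (FF \<beta> E n hm * s)" if hm: "hm \<in> set_pmf (tree_pmf \<beta> n)" for hm
  proof -
    have v: "valid n hm" using valid_tree[OF b hm] .
    let ?G = "\<lambda>v. FF \<beta> E (Suc n) (hm(Suc n := v))"
    have "(\<integral>\<^sup>+f. ennreal (?G (target hm f)) \<partial>choice_pmf \<beta> n)
        = (\<Sum>c\<in>CA n. ennreal (?G (target hm c)) * pmf (choice_pmf \<beta> n) c)"
      by (rule nn_integral_measure_pmf_support) (use set_choice[OF b n] finite_CA in auto)
    also have "\<dots> = (\<Sum>c\<in>CA n. ennreal (?G (target hm c) * choice_weight \<beta> n c))"
      by (rule sum.cong) (auto simp: pmf_choice[OF b n] ennreal_mult FF_nonneg[OF b] cw_nonneg[OF b n])
    also have "\<dots> = ennreal (\<Sum>c\<in>CA n. ?G (target hm c) * choice_weight \<beta> n c)"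
      by (rule sum_ennreal) (auto intro!: mult_nonneg_nonneg FF_nonneg[OF b] cw_nonneg[OF b n])
    also have "(\<Sum>c\<in>CA n. ?G (target hm c) * choice_weight \<beta> n c) = (\<Sum>v=1..n. ?G v * (real (deg hm n v) + \<beta>) / Nn \<beta> n)"
      by (rule lemmaT[OF b n v])
    also have "\<dots> = FF \<beta> E n hm * s" unfolding s_def using inner[OF b pf n v] by (simp add: mult.assoc)
    finally show ?thesis .
  qed
  have "(\<integral>\<^sup>+hm. ennreal (FF \<beta> E (Suc n) hm) \<partial>tree_pmf \<beta> (Suc n))
     = (\<integral>\<^sup>+hm. (\<integral>\<^sup>+f. ennreal (FF \<beta> E (Suc n) (hm(Suc n := target hm f))) \<partial>choice_pmf \<beta> n) \<partial>tree_pmf \<beta> n)"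
    unfolding k by simp
  also have "\<dots> = (\<integral>\<^sup>+hm. ennreal s * ennreal (FF \<beta> E n hm) \<partial>tree_pmf \<beta> n)"
    by (rule nn_integral_cong_AE) (auto simp: AE_measure_pmf_iff inn ennreal_mult FF_nonneg[OF b] s0 mult.commute)
  also have "\<dots> = ennreal s * (\<integral>\<^sup>+hm. ennreal (FF \<beta> E n hm) \<partial>tree_pmf \<beta> n)"
    by (rule nn_integral_cmult) simp
  finally show ?thesis unfolding s_def .
qed

lemma Q_closed:
  assumes b: "\<beta> > 0" and pf: "possible_forest E" and n: "n \<ge> 1"
  shows "(\<integral>\<^sup>+hm. ennreal (FF \<beta> E n hm) \<partial>tree_pmf \<beta> n) = ennreal (Phi \<beta> E n)"
  using n
proof (induction n rule: dec_induct)
  case base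
  have i: "indE E (Suc 0) (\<lambda>_. 0)" using pf unfolding indE_def possible_forest_def by auto
  have d: "deg (\<lambda>_. 0) (Suc 0) (Suc 0) = 0" unfolding deg_def by simp
  have r: "Rn E (Suc 0) (Suc 0) = din E (Suc 0)" using Rn_new[OF pf, of 0] by simp
  show ?case by (simp add: FF_def Phi_def i d r)
next
  case (step m)
  define s where "s = stepf \<beta> E m * pochhammer (1 + \<beta>) (din E (Suc m))"
  have ph: "Phi \<beta> E (Suc m) = s * Phi \<beta> E m"
    unfolding Phi_def s_def using step(1) by (simp add: prod.atLeastLessThan_Suc mult_ac)
  have nn: "0 \<le> s"
    unfolding s_def using stepf_pos[OF b step(1), of E] pochhammer_pos[of "1+\<beta>" "din E (Suc m)"] b by simp
  have "(\<integral>\<^sup>+hm. ennreal (FF \<beta> E (Suc m) hm) \<partial>tree_pmf \<beta> (Suc m)) = ennreal s * (\<integral>\<^sup>+hm. ennreal (FF \<beta> E m hm) \<partial>tree_pmf \<beta> m)"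
    unfolding s_def by (rule Q_step[OF b pf step(1)])
  also have "\<dots> = ennreal s * ennreal (Phi \<beta> E m)" unfolding step(3) ..
  also have "\<dots> = ennreal (s * Phi \<beta> E m)"
    by (rule ennreal_mult[OF nn less_imp_le[OF Phi_pos[OF b]], symmetric])
  finally show ?case unfolding ph .
qed

lemma prob_Phi:
  assumes b: "\<beta> > 0" and pf: "possible_forest E" and ne: "E \<noteq> {}" and t: "t \<ge> Max (fverts E)"
  shows "prob_contained \<beta> t E = Phi \<beta> E t"
proof -
  have fin: "finite E" using pf unfolding possible_forest_def by auto
  have finv: "finite (fverts E)" using fin unfolding fverts_def by auto
  have it: "\<And>i j. (i, j) \<in> E \<Longrightarrow> i \<le> t"
  proof -
    fix i j assume "(i, j) \<in> E"
    then have "i \<in> fverts E" unfolding fverts_def by force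
    then show "i \<le> t" using Max_ge[OF finv] t by fastforce
  qed
  have t1: "t \<ge> 1" using ne pf it unfolding possible_forest_def by fastforce
  let ?S = "{hm. \<forall>(i, j) \<in> E. i \<le> t \<and> hm i = j}"
  have R0: "\<And>v. Rn E t v = 0" unfolding Rn_def using it by (auto simp: card_eq_0_iff) (meson leD)
  have FFi: "\<And>hm. ennreal (FF \<beta> E t hm) = indicator ?S hm"
    unfolding FF_def R0 indE_def using it by (auto simp: indicator_def)
  have "ennreal (prob_contained \<beta> t E) = emeasure (measure_pmf (tree_pmf \<beta> t)) ?S"
    unfolding prob_contained_def by (simp add: measure_pmf.emeasure_eq_measure)
  also have "\<dots> = (\<integral>\<^sup>+hm. indicator ?S hm \<partial>tree_pmf \<beta> t)" by simp
  also have "\<dots> = (\<integral>\<^sup>+hm. ennreal (FF \<beta> E t hm) \<partial>tree_pmf \<beta> t)" unfolding FFi ..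
  also have "\<dots> = ennreal (Phi \<beta> E t)" by (rule Q_closed[OF b pf t1])
  finally show ?thesis using Phi_pos[OF b, of E t]
    by (simp add: prob_contained_def)
qed




lemma prod_shift: "t \<ge> 1 \<Longrightarrow> (\<Prod>m\<in>{1..<t}. g (Suc m)) = (\<Prod>i\<in>{2..t}. g i)"
proof -
  assume "t \<ge> 1"
  have "{2..t} = Suc ` {1..<t}" by (simp add: image_Suc_atLeastLessThan atLeastLessThanSuc_atLeastAtMost)
  moreover have "(\<Prod>i\<in>Suc ` {1..<t}. g i) = (\<Prod>m\<in>{1..<t}. g (Suc m))" by (subst prod.reindex) auto
  ultimately show ?thesis by simp
qed

lemma sum_shift: "t \<ge> 1 \<Longrightarrow> (\<Sum>m\<in>{1..<t}. g (Suc m)) = (\<Sum>i\<in>{2..t}. g i)"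
proof -
  assume "t \<ge> 1"
  have "{2..t} = Suc ` {1..<t}" by (simp add: image_Suc_atLeastLessThan atLeastLessThanSuc_atLeastAtMost)
  moreover have "(\<Sum>i\<in>Suc ` {1..<t}. g i) = (\<Sum>m\<in>{1..<t}. g (Suc m))" by (subst sum.reindex) auto
  ultimately show ?thesis by simp
qed

lemma edge_le_t:
  assumes pf: "possible_forest E" and t: "t \<ge> Max (fverts E)" and e: "(i, j) \<in> E"
  shows "i \<le> t" "1 \<le> j" "j < i"
proof -
  have fin: "finite E" using pf unfolding possible_forest_def by auto
  have finv: "finite (fverts E)" using fin unfolding fverts_def by auto
  have "i \<in> fverts E" using e unfolding fverts_def by force
  then show "i \<le> t" using Max_ge[OF finv] t by fastforce
  show "1 \<le> j" "j < i" using e pf unfolding possible_forest_def by auto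
qed

lemma gamma_part:
  assumes b: "\<beta> > 0" and pf: "possible_forest E" and t: "t \<ge> Max (fverts E)" and t1: "t \<ge> 1"
  shows "pochhammer \<beta> (din E 1) * (\<Prod>m\<in>{1..<t}. pochhammer (1 + \<beta>) (din E (Suc m)))
     = \<beta> / (real (din E 1) + \<beta>) * (\<Prod>i\<in>vminus E. Gamma (1 + real (din E i) + \<beta>) / Gamma (1 + \<beta>))"
proof -
  have fin: "finite E" using pf unfolding possible_forest_def by auto
  have p1: "pochhammer \<beta> (din E 1) = \<beta> / (real (din E 1) + \<beta>) * pochhammer (1 + \<beta>) (din E 1)"
  proof -
    have "(\<beta> + real (din E 1)) * pochhammer \<beta> (din E 1) = \<beta> * pochhammer (1 + \<beta>) (din E 1)"
      using pochhammer_rec[of \<beta> "din E 1"] pochhammer_rec'[of \<beta> "din E 1"] by (simp add: add.commute)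
    moreover have "real (din E 1) + \<beta> > 0" using b by simp
    ultimately show ?thesis by (simp add: field_simps)
  qed
  have "(\<Prod>m\<in>{1..<t}. pochhammer (1 + \<beta>) (din E (Suc m))) = (\<Prod>i\<in>{2..t}. pochhammer (1 + \<beta>) (din E i))"
    by (rule prod_shift[OF t1])
  moreover have "{1..t} = insert 1 {2..t}" using t1 by auto
  ultimately have p2: "pochhammer (1 + \<beta>) (din E 1) * (\<Prod>m\<in>{1..<t}. pochhammer (1 + \<beta>) (din E (Suc m)))
      = (\<Prod>i\<in>{1..t}. pochhammer (1 + \<beta>) (din E i))" by simp
  have vm: "vminus E \<subseteq> {1..t}"
  proof
    fix v assume "v \<in> vminus E"
    then obtain a where "(a, v) \<in> E" unfolding vminus_def by auto
    then show "v \<in> {1..t}" using edge_le_t[OF pf t, of a v] by auto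
  qed
  have z: "din E i = 0" if "i \<in> {1..t} - vminus E" for i
  proof (rule ccontr)
    assume "din E i \<noteq> 0"
    then have "{a. (a, i) \<in> E} \<noteq> {}" unfolding din_def by (metis card.empty)
    then obtain a where a: "(a, i) \<in> E" by blast
    then have "a > i" using pf unfolding possible_forest_def by auto
    moreover have "i \<in> fverts E" using a unfolding fverts_def by force
    ultimately have "i \<in> vminus E" using a unfolding vminus_def by auto
    then show False using that by auto
  qed
  have p3: "(\<Prod>i\<in>{1..t}. pochhammer (1 + \<beta>) (din E i)) = (\<Prod>i\<in>vminus E. pochhammer (1 + \<beta>) (din E i))"
  proof (rule prod.mono_neutral_right)
    show "finite {1..t}" by simp
    show "vminus E \<subseteq> {1..t}" by (rule vm)
    show "\<forall>i\<in>{1..t} - vminus E. pochhammer (1 + \<beta>) (din E i) = 1" using z by simp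
  qed
  have p4: "(\<Prod>i\<in>vminus E. pochhammer (1 + \<beta>) (din E i)) = (\<Prod>i\<in>vminus E. Gamma (1 + real (din E i) + \<beta>) / Gamma (1 + \<beta>))"
  proof (rule prod.cong)
    fix i
    have "1 + \<beta> \<notin> \<int>\<^sub>\<le>\<^sub>0" using b by auto
    then show "pochhammer (1 + \<beta>) (din E i) = Gamma (1 + real (din E i) + \<beta>) / Gamma (1 + \<beta>)"
      by (simp add: pochhammer_Gamma add_ac)
  qed simp
  show ?thesis unfolding p1 using p2 p3 p4 by (simp add: mult.assoc)
qed

definition xe :: "real \<Rightarrow> nat \<times> nat \<Rightarrow> real" where
  "xe \<beta> e = (2 + \<beta>) * (real (fst e) powr (1 + \<beta>) * real (snd e)) powr (1 / (2 + \<beta>))"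

lemma xe_pos: "\<beta> > 0 \<Longrightarrow> fst e \<ge> 1 \<Longrightarrow> snd e \<ge> 1 \<Longrightarrow> xe \<beta> e > 0"
  unfolding xe_def by (auto intro!: mult_pos_pos)

lemma Phi_main:
  assumes b: "\<beta> > 0" and pf: "possible_forest E" and t: "t \<ge> Max (fverts E)" and t1: "t \<ge> 1"
  shows "Phi \<beta> E t = main_term \<beta> E * exp ((\<Sum>m\<in>{1..<t}. ln (stepf \<beta> E m)) + (\<Sum>e\<in>E. ln (xe \<beta> e)))"
proof -
  have fin: "finite E" using pf unfolding possible_forest_def by auto
  have epos: "\<And>e. e \<in> E \<Longrightarrow> xe \<beta> e > 0"
    using pf b unfolding possible_forest_def by (auto intro!: xe_pos)
  have m1: "(\<Prod>(i, j)\<in>E. 1 / ((2 + \<beta>) * (real i powr (1 + \<beta>) * real j) powr (1 / (2 + \<beta>))))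
      = (\<Prod>e\<in>E. 1 / xe \<beta> e)" unfolding xe_def by (rule prod.cong) (auto simp: case_prod_unfold)
  have e1: "exp (\<Sum>m\<in>{1..<t}. ln (stepf \<beta> E m)) = (\<Prod>m\<in>{1..<t}. stepf \<beta> E m)"
    by (simp add: exp_sum stepf_pos[OF b])
  have e2: "exp (\<Sum>e\<in>E. ln (xe \<beta> e)) = (\<Prod>e\<in>E. xe \<beta> e)"
  proof -
    have "exp (\<Sum>e\<in>E. ln (xe \<beta> e)) = (\<Prod>e\<in>E. exp (ln (xe \<beta> e)))" by (rule exp_sum[OF fin])
    also have "\<dots> = (\<Prod>e\<in>E. xe \<beta> e)" by (rule prod.cong) (use epos in auto)
    finally show ?thesis .
  qed
  have e3: "(\<Prod>e\<in>E. 1 / xe \<beta> e) * (\<Prod>e\<in>E. xe \<beta> e) = 1"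
  proof -
    have "(\<Prod>e\<in>E. 1 / xe \<beta> e) * (\<Prod>e\<in>E. xe \<beta> e) = (\<Prod>e\<in>E. 1 / xe \<beta> e * xe \<beta> e)"
      by (rule prod.distrib[symmetric])
    also have "\<dots> = 1" by (rule prod.neutral) (use epos in force)
    finally show ?thesis .
  qed
  have "Phi \<beta> E t = (pochhammer \<beta> (din E 1) * (\<Prod>m\<in>{1..<t}. pochhammer (1 + \<beta>) (din E (Suc m))))
      * (\<Prod>m\<in>{1..<t}. stepf \<beta> E m)"
    unfolding Phi_def by (simp add: prod.distrib mult_ac)
  also have "\<dots> = main_term \<beta> E * exp ((\<Sum>m\<in>{1..<t}. ln (stepf \<beta> E m)) + (\<Sum>e\<in>E. ln (xe \<beta> e)))"
    unfolding gamma_part[OF b pf t t1] main_term_def m1 exp_add e1 e2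
    using e3 by (simp add: mult_ac)
  finally show ?thesis .
qed




lemma ln_diff_bounds:
  fixes m :: real assumes "m \<ge> 1"
  shows "1 / (m + 1) \<le> ln (m + 1) - ln m" "ln (m + 1) - ln m \<le> 1 / m"
proof -
  have m0: "m > 0" using assms by simp
  have "ln ((m + 1) / m) \<le> (m + 1) / m - 1" by (rule ln_le_minus_one) (use m0 in simp)
  moreover have "ln ((m + 1) / m) = ln (m + 1) - ln m" using m0 by (simp add: ln_div)
  moreover have "(m + 1) / m - 1 = 1 / m" using m0 by (simp add: field_simps)
  ultimately show "ln (m + 1) - ln m \<le> 1 / m" by simp
  have "ln (m / (m + 1)) \<le> m / (m + 1) - 1" by (rule ln_le_minus_one) (use m0 in simp)
  moreover have "ln (m / (m + 1)) = ln m - ln (m + 1)" using m0 by (simp add: ln_div)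
  moreover have "m / (m + 1) - 1 = - (1 / (m + 1))" using m0 by (simp add: field_simps)
  ultimately show "1 / (m + 1) \<le> ln (m + 1) - ln m" by simp
qed

lemma ln1p_lower: fixes x :: real assumes "x \<ge> 0" shows "x - x\<^sup>2 \<le> ln (1 + x)"
proof (cases "x \<le> 1")
  case True then show ?thesis using ln_one_plus_pos_lower_bound[OF assms True] by simp
next
  case False
  then have "x - x\<^sup>2 \<le> 0" by (simp add: power2_eq_square)
  moreover have "0 \<le> ln (1 + x)" using assms by simp
  ultimately show ?thesis by linarith
qed

lemma nontail_bound:
  fixes \<beta> m c :: real
  assumes b: "\<beta> > 0" and m: "m \<ge> 1" and c: "c = 0 \<or> c \<ge> 1"
  shows "\<bar>ln (1 + c / ((2 + \<beta>) * m - 2)) - c * (ln (m + 1) - ln m) / (2 + \<beta>)\<bar>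
     \<le> (2 / \<beta> + 1 / \<beta>\<^sup>2) * (c\<^sup>2 / m\<^sup>2)"
proof -
  define a where "a = 2 + \<beta>"
  define N where "N = a * m - 2"
  define ll where "ll = ln (m + 1) - ln m"
  define x where "x = c / N"
  have m0: "m > 0" using m by simp
  have c0: "c \<ge> 0" using c by auto
  have cc: "c \<le> c\<^sup>2" using c by (auto simp: power2_eq_square)
  have NB: "N \<ge> \<beta> * m" unfolding N_def a_def using m by (simp add: algebra_simps)
  have N0: "N > 0" using NB b m0 by (smt (verit) mult_pos_pos)
  have NA: "N \<le> a * m" unfolding N_def by simp
  have a0: "a > 0" unfolding a_def using b by simp
  have l1: "1 / (m + 1) \<le> ll" "ll \<le> 1 / m" using ln_diff_bounds[OF m] unfolding ll_def by auto
  have x0: "x \<ge> 0" unfolding x_def using c0 N0 by simp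
  have up1: "ln (1 + x) \<le> x" using ln_add_one_self_le_self[OF x0] .
  have lo1: "x - x\<^sup>2 \<le> ln (1 + x)" by (rule ln1p_lower[OF x0])
  have g1: "c * ll / a \<ge> c / (a * (m + 1))"
  proof -
    have "c * (1 / (m + 1)) \<le> c * ll" using l1(1) c0 by (rule mult_left_mono)
    then have "c * (1 / (m + 1)) / a \<le> c * ll / a" using a0 by (intro divide_right_mono) auto
    moreover have "c * (1 / (m + 1)) / a = c / (a * (m + 1))" by simp
    ultimately show ?thesis by (simp add: mult.commute)
  qed
  have g2: "c * ll / a \<le> x"
  proof -
    have "c * ll \<le> c * (1 / m)" using l1(2) c0 by (rule mult_left_mono)
    then have "c * ll / a \<le> c / (a * m)" using a0 by (simp add: divide_right_mono field_simps)
    also have "c / (a * m) \<le> c / N" using NA N0 c0 by (simp add: divide_left_mono)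
    finally show ?thesis unfolding x_def .
  qed
  have h1: "c / N - c / (a * (m + 1)) = c * (a + 2) / (N * (a * (m + 1)))"
    using N0 a0 m0 unfolding N_def by (simp add: field_simps)
  have h2: "c * (a + 2) / (N * (a * (m + 1))) \<le> c * (2 * a) / ((\<beta> * m) * (a * m))"
  proof (rule frac_le)
    show "0 \<le> c * (2 * a)" using c0 a0 by simp
    show "c * (a + 2) \<le> c * (2 * a)" using c0 a_def b by (intro mult_left_mono) auto
    show "0 < \<beta> * m * (a * m)" using b m0 a0 by simp
    show "\<beta> * m * (a * m) \<le> N * (a * (m + 1))"
      using NB a0 m0 b N0 by (intro mult_mono) (auto simp: algebra_simps)
  qed
  have h3: "c * (2 * a) / ((\<beta> * m) * (a * m)) = 2 / \<beta> * (c / m\<^sup>2)"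
    using a0 b m0 by (simp add: field_simps power2_eq_square)
  have upper: "ln (1 + x) - c * ll / a \<le> 2 / \<beta> * (c\<^sup>2 / m\<^sup>2)"
  proof -
    have "ln (1 + x) - c * ll / a \<le> x - c / (a * (m + 1))" using up1 g1 by simp
    also have "\<dots> \<le> 2 / \<beta> * (c / m\<^sup>2)" using h1 h2 h3 unfolding x_def by simp
    also have "\<dots> \<le> 2 / \<beta> * (c\<^sup>2 / m\<^sup>2)" using cc b m0 by (intro mult_left_mono divide_right_mono) auto
    finally show ?thesis .
  qed
  have xsq: "x\<^sup>2 \<le> 1 / \<beta>\<^sup>2 * (c\<^sup>2 / m\<^sup>2)"
  proof -
    have "x \<le> c / (\<beta> * m)" unfolding x_def using NB N0 c0 b m0 by (simp add: divide_left_mono)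
    then have "x\<^sup>2 \<le> (c / (\<beta> * m))\<^sup>2" using x0 by (simp add: power_mono)
    also have "\<dots> = 1 / \<beta>\<^sup>2 * (c\<^sup>2 / m\<^sup>2)" by (simp add: power_divide power_mult_distrib)
    finally show ?thesis .
  qed
  have lower: "- (1 / \<beta>\<^sup>2 * (c\<^sup>2 / m\<^sup>2)) \<le> ln (1 + x) - c * ll / a" using lo1 g2 xsq by simp
  have pos: "0 \<le> 2 / \<beta> * (c\<^sup>2 / m\<^sup>2)" "0 \<le> 1 / \<beta>\<^sup>2 * (c\<^sup>2 / m\<^sup>2)" using b by auto
  have "\<bar>ln (1 + x) - c * ll / a\<bar> \<le> (2 / \<beta> + 1 / \<beta>\<^sup>2) * (c\<^sup>2 / m\<^sup>2)"
  proof -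
    have "(2 / \<beta> + 1 / \<beta>\<^sup>2) * (c\<^sup>2 / m\<^sup>2) = 2 / \<beta> * (c\<^sup>2 / m\<^sup>2) + 1 / \<beta>\<^sup>2 * (c\<^sup>2 / m\<^sup>2)"
      by (rule distrib_right)
    then show ?thesis unfolding abs_le_iff using upper lower pos by linarith
  qed
  then show ?thesis unfolding x_def N_def ll_def a_def .
qed

lemma tail_bound:
  fixes \<beta> m c :: real
  assumes b: "\<beta> > 0" and m: "m \<ge> 1" and c: "c \<ge> 1"
  shows "\<bar>ln (1 / ((2 + \<beta>) * m - 2)) - c * (ln (m + 1) - ln m) / (2 + \<beta>) + (ln (2 + \<beta>) + ln (m + 1))\<bar>
     \<le> ((4 + \<beta>) / \<beta> + 1) * (c\<^sup>2 / m)"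
proof -
  define a where "a = 2 + \<beta>"
  define N where "N = a * m - 2"
  define ll where "ll = ln (m + 1) - ln m"
  have m0: "m > 0" using m by simp
  have NB: "N \<ge> \<beta> * m" unfolding N_def a_def using m by (simp add: algebra_simps)
  have N0: "N > 0" using NB b m0 by (smt (verit) mult_pos_pos)
  have a0: "a > 0" unfolding a_def using b by simp
  have l1: "1 / (m + 1) \<le> ll" "ll \<le> 1 / m" using ln_diff_bounds[OF m] unfolding ll_def by auto
  have l0: "ll \<ge> 0" using l1(1) m0 by (smt (verit) divide_nonneg_nonneg)
  have e: "ln (1 / N) + (ln a + ln (m + 1)) = ln (a * (m + 1) / N)"
    using N0 a0 m0 by (simp add: ln_div ln_mult)
  have r1: "a * (m + 1) / N \<ge> 1" using N0 a0 m0 unfolding N_def by (simp add: field_simps)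
  have lr0: "ln (a * (m + 1) / N) \<ge> 0" using r1 by simp
  have lr1: "ln (a * (m + 1) / N) \<le> (a + 2) / (\<beta> * m)"
  proof -
    have "ln (a * (m + 1) / N) \<le> a * (m + 1) / N - 1" by (rule ln_le_minus_one) (use r1 in simp)
    also have "\<dots> = (a + 2) / N" using N0 unfolding N_def by (simp add: field_simps)
    also have "\<dots> \<le> (a + 2) / (\<beta> * m)" using NB N0 a0 b m0 by (intro divide_left_mono) auto
    finally show ?thesis .
  qed
  have cl0: "c * ll / a \<ge> 0" using c l0 a0 by simp
  have cl1: "c * ll / a \<le> c / m"
  proof -
    have "c * ll \<le> c * (1 / m)" using l1(2) c by (intro mult_left_mono) auto
    moreover have "c * ll / a \<le> c * ll / 1"
      by (rule divide_left_mono) (use a_def b c l0 in auto)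
    ultimately show ?thesis by simp
  qed
  have cc: "c \<le> c\<^sup>2" "1 \<le> c\<^sup>2" using c by (auto simp: power2_eq_square) (smt (verit) mult_le_cancel_left1 mult_le_cancel_right1)
  have "(a + 2) / (\<beta> * m) = (4 + \<beta>) / \<beta> * (1 / m)" unfolding a_def using b m0 by simp
  also have "\<dots> \<le> (4 + \<beta>) / \<beta> * (c\<^sup>2 / m)" using cc b m0 by (intro mult_left_mono divide_right_mono) auto
  finally have A: "(a + 2) / (\<beta> * m) \<le> (4 + \<beta>) / \<beta> * (c\<^sup>2 / m)" .
  have B: "c / m \<le> c\<^sup>2 / m" using cc m0 by (simp add: divide_right_mono)
  have "\<bar>ln (a * (m + 1) / N) - c * ll / a\<bar> \<le> ((4 + \<beta>) / \<beta> + 1) * (c\<^sup>2 / m)"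
  proof -
    have "((4 + \<beta>) / \<beta> + 1) * (c\<^sup>2 / m) = (4 + \<beta>) / \<beta> * (c\<^sup>2 / m) + c\<^sup>2 / m"
      by (rule trans[OF distrib_right], simp)
    then show ?thesis unfolding abs_le_iff using lr0 lr1 cl0 cl1 A B by linarith
  qed
  moreover have "ln (1 / N) - c * ll / a + (ln a + ln (m + 1)) = ln (a * (m + 1) / N) - c * ll / a"
    using e by simp
  ultimately show ?thesis unfolding N_def ll_def a_def by simp
qed




definition tailp :: "(nat \<times> nat) set \<Rightarrow> nat \<Rightarrow> bool" where
  "tailp E i \<longleftrightarrow> (\<exists>j. (i, j) \<in> E)"

definition Dm :: "real \<Rightarrow> (nat \<times> nat) set \<Rightarrow> nat \<Rightarrow> real" where
  "Dm \<beta> E m = ln (stepf \<beta> E m) - real (cS E (Suc m)) * (ln (real (Suc m)) - ln (real m)) / (2 + \<beta>)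
     + (if tailp E (Suc m) then ln (2 + \<beta>) + ln (real (Suc m)) else 0)"

definition hh :: "(nat \<times> nat) set \<Rightarrow> nat \<Rightarrow> real" where
  "hh E m = (real (cS E (Suc m)))\<^sup>2 / (real m)\<^sup>2 + (if tailp E (Suc m) then (real (cS E (Suc m)))\<^sup>2 / real m else 0)"

definition KK :: "real \<Rightarrow> real" where "KK \<beta> = (2 / \<beta> + 1 / \<beta>\<^sup>2) + ((4 + \<beta>) / \<beta> + 1)"

lemma cS_tail:
  assumes pf: "possible_forest E" and "tailp E (Suc m)"
  shows "cS E (Suc m) \<ge> 1"
proof -
  obtain j where j: "(Suc m, j) \<in> E" using assms(2) unfolding tailp_def by auto
  have fin: "finite E" using pf unfolding possible_forest_def by auto
  have "(Suc m, j) \<in> {(a, b) \<in> E. Suc m \<le> a \<and> b < Suc m}" using j pf unfolding possible_forest_def by auto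
  moreover have "finite {(a, b) \<in> E. Suc m \<le> a \<and> b < Suc m}" by (rule finite_subset[OF _ fin]) auto
  ultimately have "card {(a, b) \<in> E. Suc m \<le> a \<and> b < Suc m} > 0" using card_gt_0_iff by blast
  then show ?thesis unfolding cS_def by simp
qed

lemma KK_split: "KK \<beta> * x = (2 / \<beta> + 1 / \<beta>\<^sup>2) * x + ((4 + \<beta>) / \<beta> + 1) * x"
  unfolding KK_def by (rule distrib_right)

lemma D_bound:
  assumes b: "\<beta> > 0" and pf: "possible_forest E" and m: "m \<ge> 1"
  shows "\<bar>Dm \<beta> E m\<bar> \<le> KK \<beta> * hh E m"
proof -
  define c where "c = real (cS E (Suc m))"
  have mr: "real m \<ge> 1" using m by simp
  have K1: "0 \<le> 2 / \<beta> + 1 / \<beta>\<^sup>2" "0 \<le> (4 + \<beta>) / \<beta> + 1" using b by auto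
  have s1: "real (Suc m) = real m + 1" by simp
  have h0: "0 \<le> hh E m" unfolding hh_def by simp
  show ?thesis
  proof (cases "tailp E (Suc m)")
    case True
    have c1: "c \<ge> 1" unfolding c_def using cS_tail[OF pf True] by simp
    have st: "stepf \<beta> E m = 1 / ((2 + \<beta>) * real m - 2)"
      using True unfolding stepf_def tailp_def Nn_def by auto
    have eqD: "Dm \<beta> E m = ln (1 / ((2 + \<beta>) * real m - 2)) - c * (ln (real m + 1) - ln (real m)) / (2 + \<beta>) + (ln (2 + \<beta>) + ln (real m + 1))"
      unfolding Dm_def st s1 c_def using True by simp
    have "\<bar>Dm \<beta> E m\<bar> \<le> ((4 + \<beta>) / \<beta> + 1) * (c\<^sup>2 / real m)"
      unfolding eqD by (rule tail_bound[OF b mr c1])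
    also have "\<dots> \<le> KK \<beta> * hh E m"
    proof -
      have "c\<^sup>2 / real m \<le> hh E m" unfolding hh_def c_def using True by simp
      then have "((4 + \<beta>) / \<beta> + 1) * (c\<^sup>2 / real m) \<le> ((4 + \<beta>) / \<beta> + 1) * hh E m"
        by (rule mult_left_mono) (rule K1(2))
      moreover have "0 \<le> (2 / \<beta> + 1 / \<beta>\<^sup>2) * hh E m" using K1(1) h0 by (rule mult_nonneg_nonneg)
      ultimately show ?thesis unfolding KK_split by linarith
    qed
    finally show ?thesis .
  next
    case False
    have c01: "c = 0 \<or> c \<ge> 1" unfolding c_def by auto
    have st: "stepf \<beta> E m = 1 + c / ((2 + \<beta>) * real m - 2)"
      using False unfolding stepf_def tailp_def Nn_def c_def by auto
    have eqD: "Dm \<beta> E m = ln (1 + c / ((2 + \<beta>) * real m - 2)) - c * (ln (real m + 1) - ln (real m)) / (2 + \<beta>)"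
      unfolding Dm_def st s1 c_def using False by simp
    have "\<bar>Dm \<beta> E m\<bar> \<le> (2 / \<beta> + 1 / \<beta>\<^sup>2) * (c\<^sup>2 / (real m)\<^sup>2)"
      unfolding eqD by (rule nontail_bound[OF b mr c01])
    also have "\<dots> \<le> KK \<beta> * hh E m"
    proof -
      have "c\<^sup>2 / (real m)\<^sup>2 = hh E m" unfolding hh_def c_def using False by simp
      then have "(2 / \<beta> + 1 / \<beta>\<^sup>2) * (c\<^sup>2 / (real m)\<^sup>2) = (2 / \<beta> + 1 / \<beta>\<^sup>2) * hh E m" by simp
      moreover have "0 \<le> ((4 + \<beta>) / \<beta> + 1) * hh E m" using K1(2) h0 by (rule mult_nonneg_nonneg)
      ultimately show ?thesis unfolding KK_split by linarith
    qed
    finally show ?thesis .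
  qed
qed

lemma ln_xe:
  assumes b: "\<beta> > 0" and i: "i \<ge> 1" and j: "j \<ge> 1"
  shows "ln (xe \<beta> (i, j)) = ln (2 + \<beta>) + ln (real i) - (ln (real i) - ln (real j)) / (2 + \<beta>)"
proof -
  have "ln (xe \<beta> (i, j)) = ln (2 + \<beta>) + ((1 + \<beta>) * ln (real i) + ln (real j)) / (2 + \<beta>)"
    unfolding xe_def using b i j by (simp add: ln_mult)
  also have "\<dots> = ln (2 + \<beta>) + ln (real i) - (ln (real i) - ln (real j)) / (2 + \<beta>)"
    using b by (simp add: field_simps)
  finally show ?thesis .
qed

lemma I1:
  assumes pf: "possible_forest E" and t: "t \<ge> Max (fverts E)"
  shows "(\<Sum>m\<in>{1..<t}. real (cS E (Suc m)) * (ln (real (Suc m)) - ln (real m)))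
       = (\<Sum>e\<in>E. ln (real (fst e)) - ln (real (snd e)))"
proof -
  have fin: "finite E" using pf unfolding possible_forest_def by auto
  define d where "d m = ln (real (Suc m)) - ln (real m)" for m
  have ca: "real (cS E (Suc m)) = (\<Sum>e\<in>E. if snd e \<le> m \<and> m < fst e then 1 else 0)" for m
  proof -
    have "{(a, b) \<in> E. Suc m \<le> a \<and> b < Suc m} = {e \<in> E. snd e \<le> m \<and> m < fst e}" by auto
    then have "real (cS E (Suc m)) = (\<Sum>e\<in>{e \<in> E. snd e \<le> m \<and> m < fst e}. 1)" unfolding cS_def by simp
    also have "\<dots> = (\<Sum>e\<in>E. if snd e \<le> m \<and> m < fst e then 1 else 0)" by (rule sum.inter_filter[OF fin])
    finally show ?thesis .
  qed
  have "(\<Sum>m\<in>{1..<t}. real (cS E (Suc m)) * d m) = (\<Sum>m\<in>{1..<t}. \<Sum>e\<in>E. (if snd e \<le> m \<and> m < fst e then 1 else 0) * d m)"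
    unfolding ca by (simp add: sum_distrib_right)
  also have "\<dots> = (\<Sum>e\<in>E. \<Sum>m\<in>{1..<t}. (if snd e \<le> m \<and> m < fst e then 1 else 0) * d m)"
    by (rule sum.swap)
  also have "\<dots> = (\<Sum>e\<in>E. ln (real (fst e)) - ln (real (snd e)))"
  proof (rule sum.cong)
    fix e assume e: "e \<in> E"
    obtain i j where ij: "e = (i, j)" by (cases e)
    have r: "i \<le> t" "1 \<le> j" "j < i" using edge_le_t[OF pf t, of i j] e ij by auto
    have "(\<Sum>m\<in>{1..<t}. (if snd e \<le> m \<and> m < fst e then 1 else 0) * d m) = (\<Sum>m\<in>{1..<t}. if j \<le> m \<and> m < i then d m else 0)"
      unfolding ij by (rule sum.cong) auto
    also have "\<dots> = sum d {m \<in> {1..<t}. j \<le> m \<and> m < i}" by (rule sum.inter_filter[symmetric]) simp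
    also have "{m \<in> {1..<t}. j \<le> m \<and> m < i} = {j..<i}" using r by auto
    also have "sum d {j..<i} = ln (real i) - ln (real j)"
      unfolding d_def using sum_Suc_diff'[of j i "\<lambda>m. ln (real m)"] r by simp
    finally show "(\<Sum>m\<in>{1..<t}. (if snd e \<le> m \<and> m < fst e then 1 else 0) * d m) = ln (real (fst e)) - ln (real (snd e))"
      unfolding ij by simp
  qed simp
  finally show ?thesis unfolding d_def .
qed

lemma I2:
  fixes h :: "nat \<Rightarrow> real"
  assumes pf: "possible_forest E" and t: "t \<ge> Max (fverts E)" and t1: "t \<ge> 1"
  shows "(\<Sum>m\<in>{1..<t}. if tailp E (Suc m) then h (Suc m) else 0) = (\<Sum>e\<in>E. h (fst e))"
proof -
  have "(\<Sum>m\<in>{1..<t}. if tailp E (Suc m) then h (Suc m) else (0::real))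
      = (\<Sum>i\<in>{2..t}. if tailp E i then h i else 0)"
    by (rule sum_shift[OF t1])
  also have "\<dots> = sum h {i \<in> {2..t}. tailp E i}" by (rule sum.inter_filter[symmetric]) simp
  also have "{i \<in> {2..t}. tailp E i} = fst ` E"
  proof
    show "{i \<in> {2..t}. tailp E i} \<subseteq> fst ` E" unfolding tailp_def by force
    show "fst ` E \<subseteq> {i \<in> {2..t}. tailp E i}"
    proof
      fix i assume "i \<in> fst ` E"
      then obtain j where j: "(i, j) \<in> E" by force
      then show "i \<in> {i \<in> {2..t}. tailp E i}" using edge_le_t[OF pf t j] unfolding tailp_def by auto
    qed
  qed
  also have "sum h (fst ` E) = (\<Sum>e\<in>E. h (fst e))"
  proof -
    have inj: "inj_on fst E" using pf unfolding possible_forest_def inj_on_def by auto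
    show ?thesis using sum.reindex[OF inj, of h] by (simp add: comp_def)
  qed
  finally show ?thesis .
qed

lemma L_decomp:
  assumes b: "\<beta> > 0" and pf: "possible_forest E" and t: "t \<ge> Max (fverts E)" and t1: "t \<ge> 1"
  shows "(\<Sum>m\<in>{1..<t}. ln (stepf \<beta> E m)) + (\<Sum>e\<in>E. ln (xe \<beta> e)) = (\<Sum>m\<in>{1..<t}. Dm \<beta> E m)"
proof -
  have lx: "(\<Sum>e\<in>E. ln (xe \<beta> e)) = (\<Sum>e\<in>E. ln (2 + \<beta>) + ln (real (fst e))) - (\<Sum>e\<in>E. ln (real (fst e)) - ln (real (snd e))) / (2 + \<beta>)"
  proof -
    have "(\<Sum>e\<in>E. ln (xe \<beta> e)) = (\<Sum>e\<in>E. (ln (2 + \<beta>) + ln (real (fst e))) - (ln (real (fst e)) - ln (real (snd e))) / (2 + \<beta>))"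
    proof (rule sum.cong)
      fix e assume e: "e \<in> E"
      obtain i j where ij: "e = (i, j)" by (cases e)
      have "1 \<le> j" "j < i" using e ij pf unfolding possible_forest_def by auto
      then show "ln (xe \<beta> e) = (ln (2 + \<beta>) + ln (real (fst e))) - (ln (real (fst e)) - ln (real (snd e))) / (2 + \<beta>)"
        unfolding ij using ln_xe[OF b, of i j] by simp
    qed simp
    then show ?thesis by (simp add: sum_subtractf sum_divide_distrib[symmetric])
  qed
  have "(\<Sum>m\<in>{1..<t}. Dm \<beta> E m) = (\<Sum>m\<in>{1..<t}. ln (stepf \<beta> E m))
     - (\<Sum>m\<in>{1..<t}. real (cS E (Suc m)) * (ln (real (Suc m)) - ln (real m))) / (2 + \<beta>)
     + (\<Sum>m\<in>{1..<t}. if tailp E (Suc m) then ln (2 + \<beta>) + ln (real (Suc m)) else 0)"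
    unfolding Dm_def by (simp add: sum.distrib sum_subtractf sum_divide_distrib)
  also note I1[OF pf t]
  also note I2[OF pf t t1, of "\<lambda>i. ln (2 + \<beta>) + ln (real i)"]
  finally show ?thesis using lx by simp
qed




lemma inv_sq_sum:
  assumes lo: "1 \<le> lo" and lh: "lo \<le> hi"
  shows "(\<Sum>m\<in>{lo..<hi}. 1 / (real m)\<^sup>2) \<le> 2 / real lo"
proof -
  have each: "1 / (real m)\<^sup>2 \<le> 2 * ((- (1 / real (Suc m))) - (- (1 / real m)))" if "m \<ge> 1" for m
  proof -
    have m0: "real m \<ge> 1" using that by simp
    have e: "2 * ((- (1 / real (Suc m))) - (- (1 / real m))) = 2 / (real m * (real m + 1))"
      using m0 by (simp add: field_simps)
    have "1 / (real m)\<^sup>2 = 1 / (real m * real m)" by (simp add: power2_eq_square)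
    also have "\<dots> \<le> 2 / (real m * (real m + 1))"
      using m0 by (simp add: divide_simps)
    finally show ?thesis using e by simp
  qed
  have "(\<Sum>m\<in>{lo..<hi}. 1 / (real m)\<^sup>2) \<le> (\<Sum>m\<in>{lo..<hi}. 2 * ((- (1 / real (Suc m))) - (- (1 / real m))))"
    by (rule sum_mono) (use each lo in auto)
  also have "\<dots> = 2 * (\<Sum>m\<in>{lo..<hi}. (- (1 / real (Suc m))) - (- (1 / real m)))"
    by (simp add: sum_distrib_left)
  also have "(\<Sum>m\<in>{lo..<hi}. (- (1 / real (Suc m))) - (- (1 / real m))) = (- (1 / real hi)) - (- (1 / real lo))"
    by (rule sum_Suc_diff'[OF lh, of "\<lambda>m. - (1 / real m)"])
  also have "2 * ((- (1 / real hi)) - (- (1 / real lo))) \<le> 2 / real lo" by simp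
  finally show ?thesis .
qed

locale sfor =
  fixes E :: "(nat \<times> nat) set"
  assumes pf: "possible_forest E" and ne: "E \<noteq> {}"
begin

definition "F = fverts E"
definition "xs = sorted_list_of_set F"
definition "k = length xs"

lemma finE: "finite E" using pf unfolding possible_forest_def by auto
lemma finF: "finite F" using finE unfolding F_def fverts_def by auto
lemma setxs: "set xs = F" unfolding xs_def using finF by simp
lemma sw: "sorted_wrt (<) xs" unfolding xs_def by simp
lemma F1: "u \<in> F \<Longrightarrow> u \<ge> 1"
  using pf unfolding F_def fverts_def possible_forest_def by force
lemma fstF: "(a, b) \<in> E \<Longrightarrow> a \<in> F" unfolding F_def fverts_def by force
lemma sndF: "(a, b) \<in> E \<Longrightarrow> b \<in> F" unfolding F_def fverts_def by force
lemma ab: "(a, b) \<in> E \<Longrightarrow> b < a" using pf unfolding possible_forest_def by auto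

lemma nth_in: "q < k \<Longrightarrow> xs ! q \<in> F" unfolding k_def using setxs nth_mem by blast
lemma mono_lt: "q < r \<Longrightarrow> r < k \<Longrightarrow> xs ! q < xs ! r"
  using sorted_wrt_nth_less[OF sw] unfolding k_def by blast
lemma mono_le: "q \<le> r \<Longrightarrow> r < k \<Longrightarrow> xs ! q \<le> xs ! r"
  using mono_lt by (cases "q = r") (auto intro: less_imp_le)
lemma idx: assumes "u \<in> F" shows "\<exists>r<k. xs ! r = u"
proof -
  have "u \<in> set xs" using assms setxs by simp
  then show ?thesis unfolding in_set_conv_nth k_def .
qed

lemma ge_q: "q < k \<Longrightarrow> xs ! q \<ge> Suc q"
proof (induction q)
  case 0 then show ?case using F1 nth_in by fastforce
next
  case (Suc q)
  then have "xs ! q < xs ! Suc q" using mono_lt by simp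
  then show ?case using Suc by simp
qed

lemma between: assumes "Suc q < k" "u \<in> F" "xs ! q < u" shows "xs ! Suc q \<le> u"
proof -
  obtain r where r: "r < k" "xs ! r = u" using idx[OF assms(2)] by auto
  have "\<not> r \<le> q" using mono_le[of r q] assms r by auto
  then show ?thesis using mono_le[of "Suc q" r] r by auto
qed

lemma minF: "u \<in> F \<Longrightarrow> xs ! 0 \<le> u"
  using idx mono_le[of 0] by fastforce
lemma maxF: assumes "u \<in> F" shows "u \<le> xs ! (k - 1)"
proof -
  obtain r where r: "r < k" "xs ! r = u" using idx[OF assms] by auto
  have "r \<le> k - 1" "k - 1 < k" using r by auto
  then show ?thesis using mono_le r by blast
qed

lemma k2: "k \<ge> 2"
proof -
  obtain a b where e: "(a, b) \<in> E" using ne by auto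
  have "{a, b} \<subseteq> F" using fstF[OF e] sndF[OF e] by auto
  moreover have "card {a, b} = 2" using ab[OF e] by auto
  ultimately have "card F \<ge> 2" using card_mono[OF finF, of "{a, b}"] by simp
  moreover have "k = card F" unfolding k_def xs_def using finF by simp
  ultimately show ?thesis by simp
qed

lemma hh_low: assumes "m < xs ! 0" shows "hh E m = 0"
proof -
  have S: "{(a, b) \<in> E. Suc m \<le> a \<and> b < Suc m} = {}"
  proof (rule ccontr)
    assume "{(a, b) \<in> E. Suc m \<le> a \<and> b < Suc m} \<noteq> {}"
    then obtain a b where "(a, b) \<in> E" "b < Suc m" by auto
    then show False using minF[OF sndF] assms by fastforce
  qed
  moreover have "\<not> tailp E (Suc m)"
  proof
    assume "tailp E (Suc m)"
    then obtain j where j: "(Suc m, j) \<in> E" unfolding tailp_def by auto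
    then show False using minF[OF sndF[OF j]] ab[OF j] assms by simp
  qed
  moreover have "cS E (Suc m) = 0" unfolding cS_def S by simp
  ultimately show ?thesis unfolding hh_def by simp
qed

lemma hh_high: assumes "xs ! (k - 1) \<le> m" shows "hh E m = 0"
proof -
  have S: "{(a, b) \<in> E. Suc m \<le> a \<and> b < Suc m} = {}"
  proof (rule ccontr)
    assume "{(a, b) \<in> E. Suc m \<le> a \<and> b < Suc m} \<noteq> {}"
    then obtain a b where "(a, b) \<in> E" "Suc m \<le> a" by auto
    then show False using maxF[OF fstF] assms by fastforce
  qed
  moreover have "\<not> tailp E (Suc m)"
  proof
    assume "tailp E (Suc m)"
    then obtain j where j: "(Suc m, j) \<in> E" unfolding tailp_def by auto
    then show False using maxF[OF fstF[OF j]] assms by simp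
  qed
  moreover have "cS E (Suc m) = 0" unfolding cS_def S by simp
  ultimately show ?thesis unfolding hh_def by simp
qed

lemma block_c: assumes q: "Suc q < k" and m: "xs ! q \<le> m" "m < xs ! Suc q"
  shows "cS E (Suc m) = cS E (xs ! Suc q)"
proof -
  have "{(a, b) \<in> E. Suc m \<le> a \<and> b < Suc m} = {(a, b) \<in> E. xs ! Suc q \<le> a \<and> b < xs ! Suc q}"
  proof (intro set_eqI iffI)
    fix x assume "x \<in> {(a, b) \<in> E. Suc m \<le> a \<and> b < Suc m}"
    then obtain a b where x: "x = (a, b)" "(a, b) \<in> E" "Suc m \<le> a" "b < Suc m" by auto
    have "xs ! Suc q \<le> a" using between[OF q fstF[OF x(2)]] x m by simp
    then show "x \<in> {(a, b) \<in> E. xs ! Suc q \<le> a \<and> b < xs ! Suc q}" using x m by auto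
  next
    fix x assume "x \<in> {(a, b) \<in> E. xs ! Suc q \<le> a \<and> b < xs ! Suc q}"
    then obtain a b where x: "x = (a, b)" "(a, b) \<in> E" "xs ! Suc q \<le> a" "b < xs ! Suc q" by auto
    have "b \<le> xs ! q" using between[OF q sndF[OF x(2)]] x by fastforce
    then show "x \<in> {(a, b) \<in> E. Suc m \<le> a \<and> b < Suc m}" using x m by auto
  qed
  then show ?thesis unfolding cS_def by simp
qed

lemma block_tail: assumes q: "Suc q < k" and m: "xs ! q \<le> m" "m < xs ! Suc q" and t: "tailp E (Suc m)"
  shows "Suc m = xs ! Suc q"
proof -
  obtain j where j: "(Suc m, j) \<in> E" using t unfolding tailp_def by auto
  have "xs ! Suc q \<le> Suc m" using between[OF q fstF[OF j]] m by simp
  then show ?thesis using m by simp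
qed

lemma hh_block: assumes q: "Suc q < k"
  shows "(\<Sum>m\<in>{xs ! q..<xs ! Suc q}. hh E m) \<le> 3 * ((real (cS E (xs ! Suc q)))\<^sup>2 / real (Suc q))"
proof -
  define lo where "lo = xs ! q"
  define hi where "hi = xs ! Suc q"
  define C where "C = (real (cS E hi))\<^sup>2"
  have lo1: "lo \<ge> Suc q" unfolding lo_def using ge_q q by simp
  have lohi: "lo < hi" unfolding lo_def hi_def using mono_lt q by simp
  have C0: "C \<ge> 0" unfolding C_def by simp
  have hb: "hh E m \<le> C * (1 / (real m)\<^sup>2) + (if m = hi - 1 then C / real (hi - 1) else 0)"
    if mr: "m \<in> {lo..<hi}" for m
  proof -
    have mr2: "xs ! q \<le> m" "m < xs ! Suc q" using mr unfolding lo_def hi_def by auto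
    have cm: "cS E (Suc m) = cS E hi" unfolding hi_def by (rule block_c[OF q mr2])
    have hh2: "hh E m = C / (real m)\<^sup>2 + (if tailp E (Suc m) then C / real m else 0)"
      unfolding hh_def cm C_def ..
    show ?thesis
    proof (cases "tailp E (Suc m)")
      case True
      have "Suc m = hi" unfolding hi_def by (rule block_tail[OF q mr2 True])
      then have mh: "m = hi - 1" by simp
      show ?thesis unfolding hh2 using True mh by simp
    next
      case False
      have "0 \<le> (if m = hi - 1 then C / real (hi - 1) else 0)" using C0 by simp
      then show ?thesis unfolding hh2 using False by simp
    qed
  qed
  have "(\<Sum>m\<in>{lo..<hi}. hh E m) \<le> (\<Sum>m\<in>{lo..<hi}. C * (1 / (real m)\<^sup>2) + (if m = hi - 1 then C / real (hi - 1) else 0))"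
    by (rule sum_mono) (rule hb)
  also have "\<dots> = C * (\<Sum>m\<in>{lo..<hi}. 1 / (real m)\<^sup>2) + C / real (hi - 1)"
    using lohi by (simp add: sum.distrib sum_distrib_left)
  also have "\<dots> \<le> C * (2 / real (Suc q)) + C / real (Suc q)"
  proof (rule add_mono)
    have "(\<Sum>m\<in>{lo..<hi}. 1 / (real m)\<^sup>2) \<le> 2 / real lo" by (rule inv_sq_sum) (use lo1 lohi in auto)
    also have "\<dots> \<le> 2 / real (Suc q)" using lo1 by (intro divide_left_mono) auto
    finally show "C * (\<Sum>m\<in>{lo..<hi}. 1 / (real m)\<^sup>2) \<le> C * (2 / real (Suc q))"
      using C0 by (rule mult_left_mono)
    show "C / real (hi - 1) \<le> C / real (Suc q)"
      using C0 lo1 lohi by (intro divide_left_mono) auto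
  qed
  also have "\<dots> = 3 * (C / real (Suc q))" by simp
  finally show ?thesis unfolding lo_def hi_def C_def .
qed

lemma hh_induct: "q < k \<Longrightarrow> (\<Sum>m\<in>{xs ! 0..<xs ! q}. hh E m) \<le> 3 * (\<Sum>p\<in>{1..q}. (real (cS E (xs ! p)))\<^sup>2 / real p)"
proof (induction q)
  case 0 then show ?case by simp
next
  case (Suc q)
  have "(\<Sum>m\<in>{xs ! 0..<xs ! Suc q}. hh E m) = (\<Sum>m\<in>{xs ! 0..<xs ! q}. hh E m) + (\<Sum>m\<in>{xs ! q..<xs ! Suc q}. hh E m)"
    using mono_le[of 0 q] mono_le[of q "Suc q"] Suc(2) by (simp add: sum.atLeastLessThan_concat)
  also have "\<dots> \<le> 3 * (\<Sum>p\<in>{1..q}. (real (cS E (xs ! p)))\<^sup>2 / real p) + 3 * ((real (cS E (xs ! Suc q)))\<^sup>2 / real (Suc q))"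
    using Suc.IH hh_block[OF Suc(2)] Suc(2) by (intro add_mono) auto
  also have "\<dots> = 3 * (\<Sum>p\<in>{1..Suc q}. (real (cS E (xs ! p)))\<^sup>2 / real p)"
    by (simp add: distrib_left)
  finally show ?case .
qed

lemma error_sum_eq: "error_sum E = (\<Sum>p\<in>{1..k - 1}. (real (cS E (xs ! p)))\<^sup>2 / real p)"
proof -
  have kc: "card (fverts E) = k" unfolding k_def xs_def F_def using finF F_def by simp
  have "error_sum E = (\<Sum>j\<in>{2..k}. (real (cS E (svert E j)))\<^sup>2 / real (j - 1))"
    unfolding error_sum_def kc ..
  also have "\<dots> = (\<Sum>p\<in>{1..<k}. (real (cS E (svert E (Suc p))))\<^sup>2 / real (Suc p - 1))"
    by (rule sum_shift[symmetric]) (use k2 in simp)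
  also have "\<dots> = (\<Sum>p\<in>{1..k - 1}. (real (cS E (xs ! p)))\<^sup>2 / real p)"
  proof -
    have "{1..<k} = {1..k - 1}" using k2 by auto
    then show ?thesis unfolding svert_def xs_def F_def by simp
  qed
  finally show ?thesis .
qed

lemma hh_total: assumes t: "t \<ge> Max (fverts E)"
  shows "(\<Sum>m\<in>{1..<t}. hh E m) \<le> 3 * error_sum E"
proof -
  have kk: "k - 1 < k" using k2 by simp
  have up: "xs ! (k - 1) \<le> t" using nth_in[OF kk] t Max_ge[OF finF] unfolding F_def by fastforce
  have lo: "1 \<le> xs ! 0" using F1 nth_in k2 by simp
  have "(\<Sum>m\<in>{1..<t}. hh E m) = (\<Sum>m\<in>{xs ! 0..<xs ! (k - 1)}. hh E m)"
  proof (rule sum.mono_neutral_right)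
    show "finite {1..<t}" by simp
    show "{xs ! 0..<xs ! (k - 1)} \<subseteq> {1..<t}" using up lo by auto
    show "\<forall>m\<in>{1..<t} - {xs ! 0..<xs ! (k - 1)}. hh E m = 0"
      using hh_low hh_high by fastforce
  qed
  also have "\<dots> \<le> 3 * (\<Sum>p\<in>{1..k - 1}. (real (cS E (xs ! p)))\<^sup>2 / real p)" by (rule hh_induct[OF kk])
  also have "\<dots> = 3 * error_sum E" unfolding error_sum_eq ..
  finally show ?thesis .
qed

end

theorem lemma2:
  fixes \<beta> :: real
  assumes "\<beta> > 0"
  shows "\<exists>C. \<forall>E t. possible_forest E \<longrightarrow> E \<noteq> {} \<longrightarrow> t \<ge> Max (fverts E) \<longrightarrow>
           (\<exists>\<epsilon>. \<bar>\<epsilon>\<bar> \<le> C * error_sum E \<and>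
                prob_contained \<beta> t E = main_term \<beta> E * exp \<epsilon>)"
proof (rule exI[of _ "3 * KK \<beta>"], intro allI impI)
  fix E t
  assume pf: "possible_forest E" and ne: "E \<noteq> {}" and t: "t \<ge> Max (fverts E)"
  interpret sfor E using pf ne by unfold_locales
  have b: "\<beta> > 0" by (rule assms)
  obtain i j where e: "(i, j) \<in> E" using ne by auto
  have t1: "t \<ge> 1" using edge_le_t[OF pf t e] by simp
  define \<epsilon> where "\<epsilon> = (\<Sum>m\<in>{1..<t}. Dm \<beta> E m)"
  have K0: "KK \<beta> \<ge> 0" unfolding KK_def using b by simp
  have "prob_contained \<beta> t E = main_term \<beta> E * exp \<epsilon>"
    unfolding prob_Phi[OF b pf ne t] Phi_main[OF b pf t t1] L_decomp[OF b pf t t1] \<epsilon>_def ..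
  moreover have "\<bar>\<epsilon>\<bar> \<le> 3 * KK \<beta> * error_sum E"
  proof -
    have "\<bar>\<epsilon>\<bar> \<le> (\<Sum>m\<in>{1..<t}. \<bar>Dm \<beta> E m\<bar>)" unfolding \<epsilon>_def by (rule sum_abs)
    also have "\<dots> \<le> (\<Sum>m\<in>{1..<t}. KK \<beta> * hh E m)"
      by (rule sum_mono) (rule D_bound[OF b pf], simp)
    also have "\<dots> = KK \<beta> * (\<Sum>m\<in>{1..<t}. hh E m)" by (simp add: sum_distrib_left)
    also have "\<dots> \<le> KK \<beta> * (3 * error_sum E)" by (rule mult_left_mono[OF hh_total[OF t] K0])
    finally show ?thesis by simp
  qed
  ultimately show "\<exists>\<epsilon>. \<bar>\<epsilon>\<bar> \<le> 3 * KK \<beta> * error_sum E \<and> prob_contained \<beta> t E = main_term \<beta> E * exp \<epsilon>"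
    by blast
qed


end
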